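(* Let $T_n\in(c_0)^*$ be given by $T_nx=x_n$ for $x=(x_k)_{k\ge1}\in c_0$. Then for all $N\ge2$, $\Big(\frac{N}{2\log(2N)}\Big)^{1/2}\le\mathcal{R}^\gamma(\{T_n:1\le n\le N\})\le4\Big(\frac{N}{\log N}\Big)^{1/2}.$
   Context: $c_0$ is the space of real null sequences with the sup norm. $(\gamma_n)$ are independent standard Gaussians. For $\mathscr{T}\subseteq\mathcal{L}(X,Y)$, the $\gamma$-bound $\mathcal{R}^\gamma(\mathscr{T})$ is the least $C$ such that $(\mathbb{E}\|\sum_{j=1}^J\gamma_jS_jx_j\|^2)^{1/2}\le C(\mathbb{E}\|\sum_{j=1}^J\gamma_jx_j\|^2)^{1/2}$ for all $J$, all $S_1,\dots,S_J\in\mathscr{T}$ (not necessarily distinct) and all $x_1,\dots,x_J\in X$. *)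

theory Defs
  imports "HOL-Probability.Probability"
begin

definition c0 :: "(nat \<Rightarrow> real) set" where
  "c0 = {x. x \<longlonglongrightarrow> 0}"

definition c0_norm :: "(nat \<Rightarrow> real) \<Rightarrow> real" where
  "c0_norm x = (SUP k. \<bar>x k\<bar>)"

definition gauss_measure :: "nat \<Rightarrow> (nat \<Rightarrow> real) measure" where
  "gauss_measure J = (\<Pi>\<^sub>M j\<in>{..<J}. density lborel (\<lambda>t. ennreal (std_normal_density t)))"

definition gauss_sq_c0 :: "nat \<Rightarrow> (nat \<Rightarrow> nat \<Rightarrow> real) \<Rightarrow> real" where
  "gauss_sq_c0 J x = (\<integral>\<omega>. (c0_norm (\<lambda>k. \<Sum>j<J. \<omega> j * x j k))\<^sup>2 \<partial>gauss_measure J)"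

definition gauss_sq_real :: "nat \<Rightarrow> (nat \<Rightarrow> real) \<Rightarrow> real" where
  "gauss_sq_real J y = (\<integral>\<omega>. \<bar>\<Sum>j<J. \<omega> j * y j\<bar>\<^sup>2 \<partial>gauss_measure J)"

definition gamma_bound :: "((nat \<Rightarrow> real) \<Rightarrow> real) set \<Rightarrow> real" where
  "gamma_bound \<T> = Inf {C. \<forall>J (S :: nat \<Rightarrow> (nat \<Rightarrow> real) \<Rightarrow> real) (x :: nat \<Rightarrow> nat \<Rightarrow> real).
      (\<forall>j<J. S j \<in> \<T>) \<longrightarrow> (\<forall>j<J. x j \<in> c0) \<longrightarrow>
      sqrt (gauss_sq_real J (\<lambda>j. S j (x j))) \<le> C * sqrt (gauss_sq_c0 J x)}"

definition coord :: "nat \<Rightarrow> (nat \<Rightarrow> real) \<Rightarrow> real" where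
  "coord n = (\<lambda>x. x n)"

end

theory Submission
  imports Defs "HOL-Real_Asymp.Real_Asymp"
begin


lemma nu_prob[simp]: "prob_space std_normal_distribution"
  using real_dist_normal_dist real_distribution_def by blast

lemma G_prob: "prob_space (gauss_measure J)"
  unfolding gauss_measure_def by (intro prob_space_PiM) auto

lemma sets_G[measurable_cong]: "sets (gauss_measure J) = sets (PiM {..<J} (\<lambda>_. borel))"
  unfolding gauss_measure_def by (intro sets_PiM_cong) auto

lemma space_G: "space (gauss_measure J) = ({..<J} \<rightarrow>\<^sub>E UNIV)"
  unfolding gauss_measure_def by (simp add: space_PiM)

lemma coord_distr:
  assumes "j < J"
  shows "distributed (gauss_measure J) lborel (\<lambda>\<omega>. \<omega> j) std_normal_density"
proof -
  have "distr (gauss_measure J) lborel (\<lambda>\<omega>. \<omega> j) = distr (gauss_measure J) std_normal_distribution (\<lambda>\<omega>. \<omega> j)"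
    by (rule distr_cong) auto
  also have "\<dots> = std_normal_distribution"
    unfolding gauss_measure_def using assms by (intro distr_PiM_component) auto
  finally show ?thesis unfolding distributed_def using assms by auto
qed

lemma coord_indep:
  "prob_space.indep_vars (gauss_measure J) (\<lambda>_. borel) (\<lambda>j \<omega>. \<omega> j) {..<J}"
proof (cases "J = 0")
  case True
  interpret P: prob_space "gauss_measure J" by (rule G_prob)
  show ?thesis using True unfolding P.indep_vars_def P.indep_sets_def by auto
next
  case False
  interpret P: prob_space "gauss_measure J" by (rule G_prob)
  have ne: "{..<J} \<noteq> {}" using False by auto
  have d1: "distr (gauss_measure J) (PiM {..<J} (\<lambda>_. borel)) (\<lambda>x. \<lambda>i\<in>{..<J}. x i) = gauss_measure J"
  proof -
    have "distr (gauss_measure J) (PiM {..<J} (\<lambda>_. borel)) (\<lambda>x. \<lambda>i\<in>{..<J}. x i)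
       = distr (gauss_measure J) (gauss_measure J) (\<lambda>x. x)"
      by (rule distr_cong) (auto simp: space_G sets_G)
    also have "\<dots> = gauss_measure J" by simp
    finally show ?thesis .
  qed
  have d2: "(PiM {..<J} (\<lambda>i. distr (gauss_measure J) borel (\<lambda>\<omega>. \<omega> i))) = gauss_measure J"
  proof -
    have "\<And>i. i \<in> {..<J} \<Longrightarrow> distr (gauss_measure J) borel (\<lambda>\<omega>. \<omega> i) = std_normal_distribution"
    proof -
      fix i assume i: "i \<in> {..<J}"
      have "distr (gauss_measure J) borel (\<lambda>\<omega>. \<omega> i) = distr (gauss_measure J) std_normal_distribution (\<lambda>\<omega>. \<omega> i)"
        by (rule distr_cong) auto
      also have "\<dots> = std_normal_distribution"
        unfolding gauss_measure_def using i by (intro distr_PiM_component) auto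
      finally show "distr (gauss_measure J) borel (\<lambda>\<omega>. \<omega> i) = std_normal_distribution" .
    qed
    then show ?thesis unfolding gauss_measure_def by (intro PiM_cong) auto
  qed
  show ?thesis
    by (subst P.indep_vars_iff_distr_eq_PiM'[OF ne]) (auto simp: d1 d2)
qed



lemma lin_normal:
  assumes I: "I \<subseteq> {..<J}" and ne: "\<exists>j\<in>I. c j \<noteq> 0"
  shows "distributed (gauss_measure J) lborel (\<lambda>\<omega>. \<Sum>j\<in>I. c j * \<omega> j)
           (normal_density 0 (sqrt (\<Sum>j\<in>I. (c j)\<^sup>2)))"
proof -
  interpret P: prob_space "gauss_measure J" by (rule G_prob)
  define S where "S = {j\<in>I. c j \<noteq> 0}"
  have finI: "finite I" using I finite_subset by blast
  have finS: "finite S" using finI S_def by auto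
  have neS: "S \<noteq> {}" using ne S_def by auto
  have sumeq: "(\<lambda>\<omega>. \<Sum>j\<in>I. c j * \<omega> j) = (\<lambda>\<omega>. \<Sum>j\<in>S. c j * \<omega> j)"
    unfolding S_def using finI by (intro ext sum.mono_neutral_right) auto
  have sumeq2: "(\<Sum>j\<in>I. (c j)\<^sup>2) = (\<Sum>j\<in>S. (c j)\<^sup>2)"
    unfolding S_def using finI by (intro sum.mono_neutral_right) auto
  have ind: "P.indep_vars (\<lambda>_. borel) (\<lambda>j \<omega>. c j * \<omega> j) S"
  proof -
    have "P.indep_vars (\<lambda>_. borel) (\<lambda>j \<omega>. c j * \<omega> j) {..<J}"
      by (rule P.indep_vars_compose2[OF coord_indep]) auto
    then show ?thesis by (rule P.indep_vars_subset) (use I S_def in auto)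
  qed
  have dj: "distributed (gauss_measure J) lborel (\<lambda>\<omega>. c j * \<omega> j) (normal_density 0 \<bar>c j\<bar>)"
    if "j \<in> S" for j
  proof -
    have "j < J" using that I S_def by auto
    from P.normal_density_affine[OF coord_distr[OF this], of "c j" 0] that S_def
    show ?thesis by simp
  qed
  have "distributed (gauss_measure J) lborel (\<lambda>\<omega>. \<Sum>j\<in>S. c j * \<omega> j)
           (normal_density (\<Sum>j\<in>S. 0) (sqrt (\<Sum>j\<in>S. \<bar>c j\<bar>\<^sup>2)))"
    by (rule P.sum_indep_normal[OF finS neS ind]) (use dj S_def in auto)
  then show ?thesis by (simp add: sumeq sumeq2)
qed

lemma sq_moment:
  assumes I: "I \<subseteq> {..<J}"
  shows "(\<integral>\<omega>. (\<Sum>j\<in>I. c j * \<omega> j)\<^sup>2 \<partial>gauss_measure J) = (\<Sum>j\<in>I. (c j)\<^sup>2)"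
    and "integrable (gauss_measure J) (\<lambda>\<omega>. (\<Sum>j\<in>I. c j * \<omega> j)\<^sup>2)"
proof -
  have "(\<integral>\<omega>. (\<Sum>j\<in>I. c j * \<omega> j)\<^sup>2 \<partial>gauss_measure J) = (\<Sum>j\<in>I. (c j)\<^sup>2) \<and>
        integrable (gauss_measure J) (\<lambda>\<omega>. (\<Sum>j\<in>I. c j * \<omega> j)\<^sup>2)"
  proof (cases "\<exists>j\<in>I. c j \<noteq> 0")
    case False
    interpret P: prob_space "gauss_measure J" by (rule G_prob)
    from False show ?thesis by simp
  next
    case True
    define s where "s = sqrt (\<Sum>j\<in>I. (c j)\<^sup>2)"
    have finI: "finite I" using I finite_subset by blast
    have "(\<Sum>j\<in>I. (c j)\<^sup>2) > 0" using True finI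
      by (metis (no_types, lifting) power2_less_0 sum_pos2 zero_less_power2 linorder_not_le order_le_less)
    then have s: "s > 0" "s\<^sup>2 = (\<Sum>j\<in>I. (c j)\<^sup>2)" unfolding s_def by auto
    note D = lin_normal[OF I True, folded s_def]
    have "(\<integral>\<omega>. (\<Sum>j\<in>I. c j * \<omega> j)\<^sup>2 \<partial>gauss_measure J) = (\<integral>x. normal_density 0 s x * x\<^sup>2 \<partial>lborel)"
      by (rule distributed_integral[OF D, symmetric]) auto
    also have "\<dots> = s\<^sup>2"
      using integral_normal_moment_even[OF s(1), of 0 1] by (simp add: power2_eq_square field_simps)
    finally have 1: "(\<integral>\<omega>. (\<Sum>j\<in>I. c j * \<omega> j)\<^sup>2 \<partial>gauss_measure J) = (\<Sum>j\<in>I. (c j)\<^sup>2)" using s by simp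
    have "integrable lborel (\<lambda>x. normal_density 0 s x * x\<^sup>2)"
      using integrable_normal_moment[OF s(1), of 0 2] by simp
    then have 2: "integrable (gauss_measure J) (\<lambda>\<omega>. (\<Sum>j\<in>I. c j * \<omega> j)\<^sup>2)"
      using distributed_integrable[OF D, of "\<lambda>x. x\<^sup>2"] by auto
    show ?thesis using 1 2 by blast
  qed
  then show "(\<integral>\<omega>. (\<Sum>j\<in>I. c j * \<omega> j)\<^sup>2 \<partial>gauss_measure J) = (\<Sum>j\<in>I. (c j)\<^sup>2)"
    and "integrable (gauss_measure J) (\<lambda>\<omega>. (\<Sum>j\<in>I. c j * \<omega> j)\<^sup>2)" by auto
qed



lemma c0_bdd: "y \<in> c0 \<Longrightarrow> bdd_above (range (\<lambda>k. \<bar>y k\<bar>))"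
proof -
  assume "y \<in> c0"
  then have "Bseq y" unfolding c0_def by (auto intro: convergent_imp_Bseq convergentI)
  then obtain K where "\<And>n. norm (y n) \<le> K" by (auto simp: Bseq_def)
  then show ?thesis by (intro bdd_aboveI[of _ K]) auto
qed

lemma c0_upper: "y \<in> c0 \<Longrightarrow> \<bar>y k\<bar> \<le> c0_norm y"
  unfolding c0_norm_def by (rule cSUP_upper[OF _ c0_bdd]) auto

lemma c0_nonneg: "y \<in> c0 \<Longrightarrow> 0 \<le> c0_norm y"
  using c0_upper[of y 0] by linarith

lemma c0_least: "(\<And>k. \<bar>y k\<bar> \<le> B) \<Longrightarrow> c0_norm y \<le> B"
  unfolding c0_norm_def by (rule cSUP_least) auto

lemma c0_lin: "(\<And>j. j \<in> I \<Longrightarrow> x j \<in> c0) \<Longrightarrow> (\<lambda>k. \<Sum>j\<in>I. w j * x j k) \<in> c0"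
  unfolding c0_def by (auto intro!: tendsto_null_sum tendsto_mult_right_zero)

lemma c0_sq_upper: "y \<in> c0 \<Longrightarrow> (y k)\<^sup>2 \<le> (c0_norm y)\<^sup>2"
  using c0_upper[of y k] by (metis abs_ge_zero power2_abs power_mono)

lemma F_meas:
  assumes "\<And>j. j < J \<Longrightarrow> x j \<in> c0"
  shows "(\<lambda>\<omega>. (c0_norm (\<lambda>k. \<Sum>j<J. \<omega> j * x j k))\<^sup>2) \<in> borel_measurable (gauss_measure J)"
proof -
  have "(\<lambda>\<omega>. c0_norm (\<lambda>k. \<Sum>j<J. \<omega> j * x j k)) \<in> borel_measurable (gauss_measure J)"
    unfolding c0_norm_def
  proof (rule borel_measurable_cSUP)
    fix \<omega> show "bdd_above ((\<lambda>k. \<bar>\<Sum>j<J. \<omega> j * x j k\<bar>) ` UNIV)"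
      by (rule c0_bdd, rule c0_lin) (use assms in auto)
  qed auto
  then show ?thesis by measurable
qed

lemma F_int:
  assumes "\<And>j. j < J \<Longrightarrow> x j \<in> c0"
  shows "integrable (gauss_measure J) (\<lambda>\<omega>. (c0_norm (\<lambda>k. \<Sum>j<J. \<omega> j * x j k))\<^sup>2)"
proof (rule Bochner_Integration.integrable_bound)
  define B where "B j = c0_norm (x j)" for j
  show "integrable (gauss_measure J) (\<lambda>\<omega>. (\<Sum>j<J. (B j * \<omega> j)\<^sup>2) * card {..<J})"
  proof -
    have h: "integrable (gauss_measure J) (\<lambda>\<omega>. (B j * \<omega> j)\<^sup>2)" if "j \<in> {..<J}" for j
    proof -
      from that have "{j} \<subseteq> {..<J}" by auto
      from sq_moment(2)[OF this, of "\<lambda>_. B j"] show ?thesis by simp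
    qed
    show ?thesis by (intro integrable_mult_left integrable_sum) (use h in auto)
  qed
  show "AE \<omega> in gauss_measure J. norm ((c0_norm (\<lambda>k. \<Sum>j<J. \<omega> j * x j k))\<^sup>2)
          \<le> norm ((\<Sum>j<J. (B j * \<omega> j)\<^sup>2) * card {..<J})"
  proof (rule AE_I2)
    fix \<omega>
    have "c0_norm (\<lambda>k. \<Sum>j<J. \<omega> j * x j k) \<le> (\<Sum>j<J. \<bar>B j * \<omega> j\<bar>)"
    proof (rule c0_least)
      fix k
      have "\<bar>\<Sum>j<J. \<omega> j * x j k\<bar> \<le> (\<Sum>j<J. \<bar>\<omega> j * x j k\<bar>)" by (rule sum_abs)
      also have "\<dots> \<le> (\<Sum>j<J. \<bar>B j * \<omega> j\<bar>)"
      proof (rule sum_mono)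
        fix j assume "j \<in> {..<J}"
        then have "\<bar>x j k\<bar> \<le> B j" unfolding B_def using assms c0_upper by auto
        then have "\<bar>\<omega> j\<bar> * \<bar>x j k\<bar> \<le> \<bar>\<omega> j\<bar> * \<bar>B j\<bar>"
          by (intro mult_left_mono) auto
        then show "\<bar>\<omega> j * x j k\<bar> \<le> \<bar>B j * \<omega> j\<bar>"
          by (simp add: abs_mult mult.commute)
      qed
      finally show "\<bar>\<Sum>j<J. \<omega> j * x j k\<bar> \<le> (\<Sum>j<J. \<bar>B j * \<omega> j\<bar>)" .
    qed
    moreover have "0 \<le> c0_norm (\<lambda>k. \<Sum>j<J. \<omega> j * x j k)"
      by (rule c0_nonneg, rule c0_lin) (use assms in auto)
    ultimately have "(c0_norm (\<lambda>k. \<Sum>j<J. \<omega> j * x j k))\<^sup>2 \<le> (\<Sum>j<J. \<bar>B j * \<omega> j\<bar>)\<^sup>2"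
      by (rule power_mono)
    also have "\<dots> \<le> (\<Sum>j<J. (\<bar>B j * \<omega> j\<bar>)\<^sup>2) * card {..<J}"
      by (rule sum_squared_le_sum_of_squares)
    finally show "norm ((c0_norm (\<lambda>k. \<Sum>j<J. \<omega> j * x j k))\<^sup>2)
          \<le> norm ((\<Sum>j<J. (B j * \<omega> j)\<^sup>2) * card {..<J})"
      by (simp add: sum_nonneg)
  qed
qed (rule F_meas[OF assms])



lemma real_eq: "gauss_sq_real J y = (\<Sum>j<J. (y j)\<^sup>2)"
proof -
  have "gauss_sq_real J y = (\<integral>\<omega>. (\<Sum>j\<in>{..<J}. y j * \<omega> j)\<^sup>2 \<partial>gauss_measure J)"
    unfolding gauss_sq_real_def by (simp add: mult.commute)
  also have "\<dots> = (\<Sum>j<J. (y j)\<^sup>2)" by (rule sq_moment(1)) auto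
  finally show ?thesis .
qed

lemma coord_le_c0:
  assumes "\<And>j. j < J \<Longrightarrow> x j \<in> c0"
  shows "(\<Sum>j<J. (x j m)\<^sup>2) \<le> gauss_sq_c0 J x"
proof -
  have "(\<Sum>j<J. (x j m)\<^sup>2) = (\<integral>\<omega>. (\<Sum>j\<in>{..<J}. x j m * \<omega> j)\<^sup>2 \<partial>gauss_measure J)"
    by (rule sq_moment(1)[symmetric]) auto
  also have "\<dots> \<le> gauss_sq_c0 J x"
    unfolding gauss_sq_c0_def
  proof (rule integral_mono)
    show "integrable (gauss_measure J) (\<lambda>\<omega>. (\<Sum>j\<in>{..<J}. x j m * \<omega> j)\<^sup>2)"
      by (rule sq_moment(2)) auto
    show "integrable (gauss_measure J) (\<lambda>\<omega>. (c0_norm (\<lambda>k. \<Sum>j<J. \<omega> j * x j k))\<^sup>2)"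
      by (rule F_int[OF assms])
    fix \<omega>
    have "(\<Sum>j\<in>{..<J}. x j m * \<omega> j)\<^sup>2 = ((\<lambda>k. \<Sum>j<J. \<omega> j * x j k) m)\<^sup>2"
      by (simp add: mult.commute)
    also have "\<dots> \<le> (c0_norm (\<lambda>k. \<Sum>j<J. \<omega> j * x j k))\<^sup>2"
      by (rule c0_sq_upper, rule c0_lin) (use assms in auto)
    finally show "(\<Sum>j\<in>{..<J}. x j m * \<omega> j)\<^sup>2 \<le> (c0_norm (\<lambda>k. \<Sum>j<J. \<omega> j * x j k))\<^sup>2" .
  qed
  finally show ?thesis .
qed

lemma sum_fibres_N:
  fixes a :: "nat \<Rightarrow> real" and n :: "nat \<Rightarrow> nat"
  assumes "\<And>j. j < J \<Longrightarrow> n j \<in> {1..N}"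
  shows "(\<Sum>j<J. a j) = (\<Sum>m\<in>{1..N}. \<Sum>j\<in>{j. j<J \<and> n j = m}. a j)"
proof -
  have "(\<Sum>m\<in>{1..N}. \<Sum>j\<in>{j. j \<in> {..<J} \<and> n j = m}. a j) = (\<Sum>j\<in>{..<J}. a j)"
    by (rule sum.group) (use assms in auto)
  then show ?thesis by simp
qed

lemma elem_UB:
  assumes n: "\<And>j. j < J \<Longrightarrow> n j \<in> {1..N}" and x: "\<And>j. j < J \<Longrightarrow> x j \<in> c0"
  shows "(\<Sum>j<J. (x j (n j))\<^sup>2) \<le> real N * gauss_sq_c0 J x"
proof -
  have "(\<Sum>j<J. (x j (n j))\<^sup>2) = (\<Sum>m\<in>{1..N}. \<Sum>j\<in>{j. j<J \<and> n j = m}. (x j (n j))\<^sup>2)"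
    by (rule sum_fibres_N[OF n])
  also have "\<dots> \<le> (\<Sum>m\<in>{1..N}. gauss_sq_c0 J x)"
  proof (rule sum_mono)
    fix m assume "m \<in> {1..N}"
    have "(\<Sum>j\<in>{j. j<J \<and> n j = m}. (x j (n j))\<^sup>2) = (\<Sum>j\<in>{j. j<J \<and> n j = m}. (x j m)\<^sup>2)"
      by (rule sum.cong) auto
    also have "\<dots> \<le> (\<Sum>j<J. (x j m)\<^sup>2)"
      by (rule sum_mono2) auto
    also have "\<dots> \<le> gauss_sq_c0 J x" by (rule coord_le_c0[OF x])
    finally show "(\<Sum>j\<in>{j. j<J \<and> n j = m}. (x j (n j))\<^sup>2) \<le> gauss_sq_c0 J x" .
  qed
  also have "\<dots> = real N * gauss_sq_c0 J x" by simp
  finally show ?thesis .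
qed



lemma phi_deriv: "(std_normal_density has_real_derivative (- x * std_normal_density x)) (at x)"
  unfolding std_normal_density_def
  by (auto intro!: derivative_eq_intros simp: power2_eq_square field_simps)

lemma tail_nn:
  fixes s :: real assumes s: "s > 0"
  shows "(\<integral>\<^sup>+x. ennreal (std_normal_density x * max 0 (x\<^sup>2 - s\<^sup>2)) \<partial>lborel)
           \<le> ennreal (4 * std_normal_density s / s)"
proof -
  define \<phi> where "\<phi> = std_normal_density"
  define g where "g x = (x^3 - s\<^sup>2 * x) / s * \<phi> x" for x
  define F where "F x = - (x\<^sup>2 + 2 - s\<^sup>2) * \<phi> x / s" for x
  have \<phi>pos: "\<phi> x > 0" for x unfolding \<phi>_def std_normal_density_def by simp
  have g_meas[measurable]: "g \<in> borel_measurable borel" unfolding g_def \<phi>_def by measurable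
  have FD: "(F has_real_derivative g x) (at x)" for x
    unfolding F_def g_def
    using phi_deriv[of x, folded \<phi>_def] s
    by (auto intro!: derivative_eq_intros simp: power2_eq_square) (simp add: algebra_simps power3_eq_cube)
  have gnn: "0 \<le> g x" if "s \<le> x" for x
  proof -
    have "x^3 - s\<^sup>2 * x = x * (x\<^sup>2 - s\<^sup>2)" by (simp add: algebra_simps power2_eq_square power3_eq_cube)
    moreover have "x\<^sup>2 - s\<^sup>2 \<ge> 0" using that s by (simp add: power_mono)
    ultimately show ?thesis unfolding g_def using that s \<phi>pos[of x] by simp
  qed
  have lim: "(F \<longlongrightarrow> 0) at_top"
    unfolding F_def \<phi>_def std_normal_density_def using s by real_asymp
  have I1: "(\<integral>\<^sup>+x. ennreal (g x) * indicator {s..} x \<partial>lborel) = 0 - F s"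
    by (rule nn_integral_FTC_atLeast[OF g_meas]) (use FD gnn lim in auto)
  have Fs: "0 - F s = 2 * \<phi> s / s" unfolding F_def by (simp add: field_simps)
  have I2: "(\<integral>\<^sup>+x. ennreal (g (-x)) * indicator {s..} (-x) \<partial>lborel) =
            (\<integral>\<^sup>+x. ennreal (g x) * indicator {s..} x \<partial>lborel)"
    using nn_integral_real_affine[of "\<lambda>x. ennreal (g x) * indicator {s..} x" "-1" 0] by simp
  have pt: "ennreal (\<phi> x * max 0 (x\<^sup>2 - s\<^sup>2)) \<le>
      ennreal (g x) * indicator {s..} x + ennreal (g (-x)) * indicator {s..} (-x)" for x
  proof (cases "s \<le> x")
    case True
    have "\<phi> x * max 0 (x\<^sup>2 - s\<^sup>2) \<le> g x"
    proof -
      have d: "x\<^sup>2 - s\<^sup>2 \<ge> 0" using True s by (simp add: power_mono)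
      have "g x = (x / s) * ((x\<^sup>2 - s\<^sup>2) * \<phi> x)" unfolding g_def
        by (simp add: field_simps power2_eq_square power3_eq_cube)
      moreover have "(x / s) \<ge> 1" using True s by simp
      moreover have "(x\<^sup>2 - s\<^sup>2) * \<phi> x \<ge> 0" using d \<phi>pos[of x] by simp
      ultimately have "g x \<ge> (x\<^sup>2 - s\<^sup>2) * \<phi> x"
        by (metis mult_le_cancel_right1 mult.commute mult_right_mono mult_1 order_trans order_refl)
      then show ?thesis using d by (simp add: mult.commute)
    qed
    then have a: "ennreal (\<phi> x * max 0 (x\<^sup>2 - s\<^sup>2)) \<le> ennreal (g x) * indicator {s..} x"
      using True by (simp add: ennreal_leI)
    have b: "ennreal (g x) * indicator {s..} x \<le> ennreal (g x) * indicator {s..} x + ennreal (g (-x)) * indicator {s..} (-x)"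
      by (rule add_increasing2) auto
    show ?thesis using a b by (rule order_trans)
  next
    case False
    show ?thesis
    proof (cases "s \<le> -x")
      case True
      have "\<phi> x * max 0 (x\<^sup>2 - s\<^sup>2) \<le> g (-x)"
      proof -
        have d: "x\<^sup>2 - s\<^sup>2 \<ge> 0" using True s
          by (metis abs_le_square_iff abs_minus_cancel abs_of_pos diff_ge_0_iff_ge abs_ge_self order_trans power2_abs)
        have pe: "\<phi> (-x) = \<phi> x" unfolding \<phi>_def std_normal_density_def by simp
        have "g (-x) = (-x / s) * ((x\<^sup>2 - s\<^sup>2) * \<phi> x)" unfolding g_def pe using s
          by (simp add: field_simps power2_eq_square power3_eq_cube)
        moreover have "(-x / s) \<ge> 1" using True s by (simp add: divide_simps)
        moreover have "(x\<^sup>2 - s\<^sup>2) * \<phi> x \<ge> 0" using d \<phi>pos[of x] by simp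
        ultimately have "g (-x) \<ge> (x\<^sup>2 - s\<^sup>2) * \<phi> x"
          by (metis mult_le_cancel_right1 mult.commute mult_right_mono mult_1 order_trans order_refl)
        then show ?thesis using d by (simp add: mult.commute)
      qed
      then have a: "ennreal (\<phi> x * max 0 (x\<^sup>2 - s\<^sup>2)) \<le> ennreal (g (-x)) * indicator {s..} (-x)"
        using True by (simp add: ennreal_leI)
      have b: "ennreal (g (-x)) * indicator {s..} (-x) \<le> ennreal (g x) * indicator {s..} x + ennreal (g (-x)) * indicator {s..} (-x)"
        by (rule add_increasing) auto
      show ?thesis using a b by (rule order_trans)
    next
      case False2: False
      have "x\<^sup>2 - s\<^sup>2 \<le> 0" using False False2 s
        by (simp add: abs_le_square_iff[symmetric] abs_if)
      then have "max 0 (x\<^sup>2 - s\<^sup>2) = 0" by simp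
      then show ?thesis by simp
    qed
  qed
  have "(\<integral>\<^sup>+x. ennreal (std_normal_density x * max 0 (x\<^sup>2 - s\<^sup>2)) \<partial>lborel)
     \<le> (\<integral>\<^sup>+x. ennreal (g x) * indicator {s..} x + ennreal (g (-x)) * indicator {s..} (-x) \<partial>lborel)"
    by (rule nn_integral_mono) (use pt in \<open>auto simp: \<phi>_def\<close>)
  also have "\<dots> = (\<integral>\<^sup>+x. ennreal (g x) * indicator {s..} x \<partial>lborel) +
                  (\<integral>\<^sup>+x. ennreal (g (-x)) * indicator {s..} (-x) \<partial>lborel)"
    by (rule nn_integral_add) auto
  also have "\<dots> = ennreal (2 * \<phi> s / s) + ennreal (2 * \<phi> s / s)"
    using I1 I2 Fs by simp
  also have "\<dots> = ennreal (4 * std_normal_density s / s)"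
    using \<phi>pos[of s] s by (simp add: \<phi>_def ennreal_plus[symmetric] del: ennreal_plus)
  finally show ?thesis .
qed



lemma tail_int:
  fixes s :: real assumes s: "s > 0"
  shows "integrable lborel (\<lambda>x. std_normal_density x * max 0 (x\<^sup>2 - s\<^sup>2))"
    and "(\<integral>x. std_normal_density x * max 0 (x\<^sup>2 - s\<^sup>2) \<partial>lborel) \<le> 4 * std_normal_density s / s"
proof -
  have nn: "\<And>x. 0 \<le> std_normal_density x * max 0 (x\<^sup>2 - s\<^sup>2)" by simp
  show I: "integrable lborel (\<lambda>x. std_normal_density x * max 0 (x\<^sup>2 - s\<^sup>2))"
    by (rule integrableI_nonneg) (use tail_nn[OF s] nn in \<open>auto simp: top.not_eq_extremum intro: le_less_trans\<close>)
  have "ennreal (\<integral>x. std_normal_density x * max 0 (x\<^sup>2 - s\<^sup>2) \<partial>lborel)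
     = (\<integral>\<^sup>+x. ennreal (std_normal_density x * max 0 (x\<^sup>2 - s\<^sup>2)) \<partial>lborel)"
    by (rule nn_integral_eq_integral[symmetric]) (use I nn in auto)
  also have "\<dots> \<le> ennreal (4 * std_normal_density s / s)" by (rule tail_nn[OF s])
  finally show "(\<integral>x. std_normal_density x * max 0 (x\<^sup>2 - s\<^sup>2) \<partial>lborel) \<le> 4 * std_normal_density s / s"
    using s by (subst (asm) ennreal_le_iff) auto
qed

definition eunit :: "nat \<Rightarrow> nat \<Rightarrow> real" where
  "eunit j = (\<lambda>k. if k = Suc j then 1 else 0)"

lemma eunit_c0: "eunit j \<in> c0"
  unfolding c0_def eunit_def mem_Collect_eq
proof (rule tendsto_eventually)
  show "\<forall>\<^sub>F k in sequentially. (if k = Suc j then 1 else 0) = (0::real)"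
    by (rule eventually_sequentiallyI[of "Suc (Suc j)"]) auto
qed

lemma eunit_sum: "(\<Sum>j<N. \<omega> j * eunit j k) = (if k \<noteq> 0 \<and> k - 1 < N then \<omega> (k - 1) else 0)"
proof (cases k)
  case 0 then show ?thesis by (simp add: eunit_def)
next
  case (Suc i)
  have "(\<Sum>j<N. \<omega> j * eunit j k) = (\<Sum>j\<in>{..<N}. if i = j then \<omega> j else 0)"
    unfolding eunit_def Suc by (rule sum.cong) auto
  also have "\<dots> = (if i \<in> {..<N} then \<omega> i else 0)" by (subst sum.delta') auto
  finally show ?thesis using Suc by simp
qed

lemma eunit_pt:
  assumes a: "a \<ge> 0"
  shows "(c0_norm (\<lambda>k. \<Sum>j<N. \<omega> j * eunit j k))\<^sup>2 \<le> a + (\<Sum>j<N. max 0 ((\<omega> j)\<^sup>2 - a))"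
proof -
  define R where "R = a + (\<Sum>j<N. max 0 ((\<omega> j)\<^sup>2 - a))"
  have R0: "R \<ge> 0" unfolding R_def using a by (auto intro!: sum_nonneg add_nonneg_nonneg)
  have "c0_norm (\<lambda>k. \<Sum>j<N. \<omega> j * eunit j k) \<le> sqrt R"
  proof (rule c0_least)
    fix k
    have "(\<Sum>j<N. \<omega> j * eunit j k)\<^sup>2 \<le> R"
    proof (cases "k \<noteq> 0 \<and> k - 1 < N")
      case True
      have "(\<omega> (k-1))\<^sup>2 \<le> a + max 0 ((\<omega> (k-1))\<^sup>2 - a)" by simp
      also have "max 0 ((\<omega> (k-1))\<^sup>2 - a) \<le> (\<Sum>j<N. max 0 ((\<omega> j)\<^sup>2 - a))"
        by (rule member_le_sum[of "k-1" _ "\<lambda>j. max 0 ((\<omega> j)\<^sup>2 - a)"]) (use True in auto)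
      then have "a + max 0 ((\<omega> (k-1))\<^sup>2 - a) \<le> R" unfolding R_def by simp
      finally show ?thesis using True by (simp add: eunit_sum)
    next
      case False then show ?thesis using R0 by (auto simp add: eunit_sum)
    qed
    then show "\<bar>\<Sum>j<N. \<omega> j * eunit j k\<bar> \<le> sqrt R"
      using real_sqrt_le_mono by fastforce
  qed
  moreover have "0 \<le> c0_norm (\<lambda>k. \<Sum>j<N. \<omega> j * eunit j k)"
    by (rule c0_nonneg, rule c0_lin) (auto intro: eunit_c0)
  ultimately have "(c0_norm (\<lambda>k. \<Sum>j<N. \<omega> j * eunit j k))\<^sup>2 \<le> (sqrt R)\<^sup>2"
    by (rule power_mono)
  then show ?thesis using R0 unfolding R_def by simp
qed

lemma LB_gauss_gen:
  fixes s :: real assumes s: "s > 0"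
  shows "gauss_sq_c0 N eunit \<le> s\<^sup>2 + real N * (4 * std_normal_density s / s)"
proof -
  interpret P: prob_space "gauss_measure N" by (rule G_prob)
  have ej: "(\<integral>\<omega>. max 0 ((\<omega> j)\<^sup>2 - s\<^sup>2) \<partial>gauss_measure N) \<le> 4 * std_normal_density s / s"
    and ij: "integrable (gauss_measure N) (\<lambda>\<omega>. max 0 ((\<omega> j)\<^sup>2 - s\<^sup>2))" if "j < N" for j
  proof -
    note D = coord_distr[OF that]
    have "(\<integral>\<omega>. max 0 ((\<omega> j)\<^sup>2 - s\<^sup>2) \<partial>gauss_measure N) =
          (\<integral>x. std_normal_density x * max 0 (x\<^sup>2 - s\<^sup>2) \<partial>lborel)"
      by (rule distributed_integral[OF D, symmetric]) auto
    then show "(\<integral>\<omega>. max 0 ((\<omega> j)\<^sup>2 - s\<^sup>2) \<partial>gauss_measure N) \<le> 4 * std_normal_density s / s"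
      using tail_int(2)[OF s] by simp
    show "integrable (gauss_measure N) (\<lambda>\<omega>. max 0 ((\<omega> j)\<^sup>2 - s\<^sup>2))"
      using distributed_integrable[OF D, of "\<lambda>x. max 0 (x\<^sup>2 - s\<^sup>2)"] tail_int(1)[OF s] by auto
  qed
  have "gauss_sq_c0 N eunit \<le> (\<integral>\<omega>. s\<^sup>2 + (\<Sum>j<N. max 0 ((\<omega> j)\<^sup>2 - s\<^sup>2)) \<partial>gauss_measure N)"
    unfolding gauss_sq_c0_def
  proof (rule integral_mono)
    show "integrable (gauss_measure N) (\<lambda>\<omega>. (c0_norm (\<lambda>k. \<Sum>j<N. \<omega> j * eunit j k))\<^sup>2)"
      by (rule F_int) (rule eunit_c0)
    show "integrable (gauss_measure N) (\<lambda>\<omega>. s\<^sup>2 + (\<Sum>j<N. max 0 ((\<omega> j)\<^sup>2 - s\<^sup>2)))"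
      using ij by (intro Bochner_Integration.integrable_add integrable_sum) auto
  qed (rule eunit_pt, simp)
  also have "\<dots> = s\<^sup>2 + (\<Sum>j<N. (\<integral>\<omega>. max 0 ((\<omega> j)\<^sup>2 - s\<^sup>2) \<partial>gauss_measure N))"
    using ij by (subst Bochner_Integration.integral_add) (auto simp: Bochner_Integration.integral_sum P.prob_space)
  also have "\<dots> \<le> s\<^sup>2 + (\<Sum>j<N. 4 * std_normal_density s / s)"
    using ej by (intro add_left_mono sum_mono) auto
  finally show ?thesis by simp
qed

lemma LB_gauss:
  assumes N: "N \<ge> 2"
  shows "gauss_sq_c0 N eunit \<le> 2 * ln (2 * real N)"
proof -
  define L where "L = ln (real N)"
  have l2: "ln (2::real) > 69/100" using ln_approx_bounds[of 2 3] by (simp add: eval_nat_numeral)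
  have LL: "L \<ge> ln 2" unfolding L_def using N by simp
  define s where "s = sqrt (2 * L)"
  have Lpos: "L > 0" using LL l2 by linarith
  have s: "s > 0" unfolding s_def using Lpos by simp
  have s2: "s\<^sup>2 = 2 * L" unfolding s_def using Lpos by simp
  have phis: "std_normal_density s = 1 / (real N * sqrt (2 * pi))"
  proof -
    have "exp (- s\<^sup>2 / 2) = 1 / real N" using s2 N unfolding L_def by (simp add: exp_minus inverse_eq_divide)
    then show ?thesis unfolding std_normal_density_def by simp
  qed
  have key: "4 / (sqrt (2 * pi) * s) \<le> 2 * ln 2"
  proof -
    have pi: "pi \<ge> 314/100" using pi_approx by simp
    have "(ln 2)\<^sup>2 * (pi * L) \<ge> (69/100)\<^sup>2 * (314/100 * (69/100))"
      using l2 pi LL by (intro mult_mono power_mono) auto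
    then have "(ln 2)\<^sup>2 * (pi * L) \<ge> 1" by (simp add: power2_eq_square)
    then have "sqrt ((ln 2)\<^sup>2 * (pi * L)) \<ge> 1" by simp
    then have "ln 2 * sqrt (pi * L) \<ge> 1" using l2 by (simp add: real_sqrt_mult)
    moreover have "sqrt (2 * pi) * s = 2 * sqrt (pi * L)"
    proof -
      have "sqrt (2 * pi) * s = sqrt (4 * (pi * L))" unfolding s_def
        by (simp add: real_sqrt_mult[symmetric] mult.commute mult.left_commute)
      also have "\<dots> = 2 * sqrt (pi * L)" by (simp add: real_sqrt_mult)
      finally show ?thesis .
    qed
    ultimately show ?thesis using l2 Lpos
      by (simp add: divide_simps)
  qed
  have "gauss_sq_c0 N eunit \<le> s\<^sup>2 + real N * (4 * std_normal_density s / s)"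
    by (rule LB_gauss_gen[OF s])
  also have "real N * (4 * std_normal_density s / s) = 4 / (sqrt (2 * pi) * s)"
    using N by (simp add: phis field_simps)
  also have "s\<^sup>2 + 4 / (sqrt (2 * pi) * s) \<le> 2 * L + 2 * ln 2" using key s2 by simp
  also have "2 * L + 2 * ln 2 = 2 * ln (2 * real N)" unfolding L_def using N by (simp add: ln_mult)
  finally show ?thesis .
qed



lemma flip_meas:
  "(\<lambda>\<omega>. \<lambda>j\<in>{..<J}. e j * \<omega> j) \<in> measurable (gauss_measure J) (gauss_measure J)"
proof -
  have "(\<lambda>\<omega>. \<lambda>j\<in>{..<J}. e j * \<omega> j) \<in> measurable (PiM {..<J} (\<lambda>_. borel)) (PiM {..<J} (\<lambda>_. borel :: real measure))"
    by measurable
  then show ?thesis by (simp add: measurable_cong_sets[OF sets_G sets_G])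
qed

lemma flip_inv:
  fixes e :: "nat \<Rightarrow> real" assumes e: "\<And>j. e j = 1 \<or> e j = -1"
  shows "distr (gauss_measure J) (gauss_measure J) (\<lambda>\<omega>. \<lambda>j\<in>{..<J}. e j * \<omega> j) = gauss_measure J"
proof (cases "J = 0")
  case True
  have "distr (gauss_measure J) (gauss_measure J) (\<lambda>\<omega>. \<lambda>j\<in>{..<J}. e j * \<omega> j)
      = distr (gauss_measure J) (gauss_measure J) (\<lambda>\<omega>. \<omega>)"
    by (rule distr_cong) (auto simp: space_G True)
  then show ?thesis by simp
next
  case False
  interpret P: prob_space "gauss_measure J" by (rule G_prob)
  have ne: "{..<J} \<noteq> {}" using False by auto
  have ind: "P.indep_vars (\<lambda>_. borel) (\<lambda>j \<omega>. e j * \<omega> j) {..<J}"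
    by (rule P.indep_vars_compose2[OF coord_indep]) auto
  have d1: "distr (gauss_measure J) (gauss_measure J) (\<lambda>\<omega>. \<lambda>j\<in>{..<J}. e j * \<omega> j) =
            distr (gauss_measure J) (PiM {..<J} (\<lambda>_. borel)) (\<lambda>\<omega>. \<lambda>j\<in>{..<J}. e j * \<omega> j)"
    by (rule distr_cong) (auto simp: sets_G)
  have dj: "distr (gauss_measure J) borel (\<lambda>\<omega>. e j * \<omega> j) = std_normal_distribution" if "j < J" for j
  proof -
    have ej: "e j \<noteq> 0" "\<bar>e j\<bar> = 1" using e[of j] by auto
    have D: "distributed (gauss_measure J) lborel (\<lambda>\<omega>. 0 + e j * \<omega> j) (normal_density (0 + e j * 0) (\<bar>e j\<bar> * 1))"
      by (rule P.normal_density_affine[OF coord_distr[OF that]]) (use ej in auto)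
    have "distr (gauss_measure J) borel (\<lambda>\<omega>. e j * \<omega> j) = distr (gauss_measure J) lborel (\<lambda>\<omega>. e j * \<omega> j)"
      by (rule distr_cong) auto
    also have "\<dots> = std_normal_distribution" using D ej unfolding distributed_def by simp
    finally show ?thesis .
  qed
  have "distr (gauss_measure J) (PiM {..<J} (\<lambda>_. borel)) (\<lambda>\<omega>. \<lambda>j\<in>{..<J}. e j * \<omega> j)
      = PiM {..<J} (\<lambda>j. distr (gauss_measure J) borel (\<lambda>\<omega>. e j * \<omega> j))"
    using P.indep_vars_iff_distr_eq_PiM'[OF ne, where M'="\<lambda>_. borel" and X="\<lambda>j \<omega>. e j * \<omega> j"] ind by auto
  also have "\<dots> = PiM {..<J} (\<lambda>_. std_normal_distribution)"
    by (intro PiM_cong) (auto simp: dj)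
  also have "\<dots> = gauss_measure J" unfolding gauss_measure_def ..
  finally show ?thesis using d1 by simp
qed

lemma flip_integral:
  fixes e :: "nat \<Rightarrow> real" and f :: "(nat \<Rightarrow> real) \<Rightarrow> real"
  assumes e: "\<And>j. e j = 1 \<or> e j = -1"
    and f: "integrable (gauss_measure J) f"
  shows "integrable (gauss_measure J) (\<lambda>\<omega>. f (\<lambda>j\<in>{..<J}. e j * \<omega> j))"
    and "(\<integral>\<omega>. f (\<lambda>j\<in>{..<J}. e j * \<omega> j) \<partial>gauss_measure J) = (\<integral>\<omega>. f \<omega> \<partial>gauss_measure J)"
proof -
  have fm: "f \<in> borel_measurable (gauss_measure J)" using f by auto
  show "integrable (gauss_measure J) (\<lambda>\<omega>. f (\<lambda>j\<in>{..<J}. e j * \<omega> j))"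
    using integrable_distr_eq[OF flip_meas[where J=J and e=e] fm] f flip_inv[of e, OF e] by simp
  show "(\<integral>\<omega>. f (\<lambda>j\<in>{..<J}. e j * \<omega> j) \<partial>gauss_measure J) = (\<integral>\<omega>. f \<omega> \<partial>gauss_measure J)"
    using integral_distr[OF flip_meas[where J=J and e=e] fm] flip_inv[of e, OF e] by simp
qed



definition sg :: "nat set \<Rightarrow> nat \<Rightarrow> real" where
  "sg B p = (if p \<in> B then -1 else 1)"

lemma sg_pm: "sg B p = 1 \<or> sg B p = -1" unfolding sg_def by auto

lemma sign_sum:
  fixes v :: "nat \<Rightarrow> real"
  assumes "finite P"
  shows "(\<Sum>B\<in>Pow P. (\<Sum>p\<in>P. sg B p * v p)\<^sup>2) = 2 ^ card P * (\<Sum>p\<in>P. (v p)\<^sup>2)"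
  using assms
proof (induction P rule: finite_induct)
  case empty
  then show ?case by simp
next
  case (insert a P)
  define s where "s B = (\<Sum>p\<in>P. sg B p * v p)" for B
  have inj: "inj_on (insert a) (Pow P)" using insert.hyps(2)
    by (auto simp: inj_on_def)
  have disj: "Pow P \<inter> insert a ` Pow P = {}" using insert.hyps(2) by auto
  have e1: "(\<Sum>p\<in>insert a P. sg B p * v p) = v a + s B" if "B \<in> Pow P" for B
  proof -
    have "a \<notin> B" using that insert.hyps(2) by auto
    then show ?thesis using insert.hyps unfolding s_def by (simp add: sg_def)
  qed
  have e2: "(\<Sum>p\<in>insert a P. sg (insert a B) p * v p) = - v a + s B" if "B \<in> Pow P" for B
  proof -
    have "(\<Sum>p\<in>P. sg (insert a B) p * v p) = s B"
      unfolding s_def using insert.hyps(2) by (intro sum.cong) (auto simp: sg_def)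
    then show ?thesis using insert.hyps by (simp add: sg_def)
  qed
  have "(\<Sum>B\<in>Pow (insert a P). (\<Sum>p\<in>insert a P. sg B p * v p)\<^sup>2)
      = (\<Sum>B\<in>Pow P. (\<Sum>p\<in>insert a P. sg B p * v p)\<^sup>2) +
        (\<Sum>B\<in>insert a ` Pow P. (\<Sum>p\<in>insert a P. sg B p * v p)\<^sup>2)"
    unfolding Pow_insert using disj insert.hyps(1) by (intro sum.union_disjoint) auto
  also have "(\<Sum>B\<in>insert a ` Pow P. (\<Sum>p\<in>insert a P. sg B p * v p)\<^sup>2)
      = (\<Sum>B\<in>Pow P. (\<Sum>p\<in>insert a P. sg (insert a B) p * v p)\<^sup>2)"
    by (rule sum.reindex[OF inj, unfolded comp_def])
  also have "(\<Sum>B\<in>Pow P. (\<Sum>p\<in>insert a P. sg B p * v p)\<^sup>2) = (\<Sum>B\<in>Pow P. (v a + s B)\<^sup>2)"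
    by (rule sum.cong) (auto simp: e1)
  also have "(\<Sum>B\<in>Pow P. (\<Sum>p\<in>insert a P. sg (insert a B) p * v p)\<^sup>2) = (\<Sum>B\<in>Pow P. (- v a + s B)\<^sup>2)"
    by (rule sum.cong) (auto simp: e2)
  also have "(\<Sum>B\<in>Pow P. (v a + s B)\<^sup>2) + (\<Sum>B\<in>Pow P. (- v a + s B)\<^sup>2)
      = (\<Sum>B\<in>Pow P. 2 * (v a)\<^sup>2 + 2 * (s B)\<^sup>2)"
    by (simp add: sum.distrib[symmetric] power2_eq_square algebra_simps)
  also have "\<dots> = 2 * (v a)\<^sup>2 * 2 ^ card P + 2 * (\<Sum>B\<in>Pow P. (s B)\<^sup>2)"
    using insert.hyps(1) by (simp add: sum.distrib sum_distrib_left[symmetric] card_Pow)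
  also have "\<dots> = 2 ^ card (insert a P) * (\<Sum>p\<in>insert a P. (v p)\<^sup>2)"
    using insert by (simp add: s_def algebra_simps)
  finally show ?case .
qed



definition Fn :: "nat \<Rightarrow> (nat \<Rightarrow> nat \<Rightarrow> real) \<Rightarrow> (nat \<Rightarrow> real) \<Rightarrow> real" where
  "Fn J x \<omega> = (c0_norm (\<lambda>k. \<Sum>j<J. \<omega> j * x j k))\<^sup>2"

definition Tf :: "nat \<Rightarrow> (nat \<Rightarrow> nat) \<Rightarrow> nat set \<Rightarrow> (nat \<Rightarrow> real) \<Rightarrow> (nat \<Rightarrow> real)" where
  "Tf J n B \<omega> = (\<lambda>j\<in>{..<J}. sg B (n j) * \<omega> j)"

definition Avg :: "nat \<Rightarrow> nat \<Rightarrow> (nat \<Rightarrow> nat) \<Rightarrow> (nat \<Rightarrow> nat \<Rightarrow> real) \<Rightarrow> (nat \<Rightarrow> real) \<Rightarrow> real" where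
  "Avg N J n x \<omega> = (\<Sum>B\<in>Pow {1..N}. Fn J x (Tf J n B \<omega>)) / 2 ^ N"

lemma Avg_int:
  assumes x: "\<And>j. j < J \<Longrightarrow> x j \<in> c0"
  shows "integrable (gauss_measure J) (Avg N J n x)"
    and "(\<integral>\<omega>. Avg N J n x \<omega> \<partial>gauss_measure J) = gauss_sq_c0 J x"
proof -
  have Fi: "integrable (gauss_measure J) (Fn J x)" unfolding Fn_def using F_int[OF x] by simp
  have e: "\<And>j. sg B (n j) = 1 \<or> sg B (n j) = -1" for B by (rule sg_pm)
  have i: "integrable (gauss_measure J) (\<lambda>\<omega>. Fn J x (Tf J n B \<omega>))" for B
    unfolding Tf_def by (rule flip_integral(1)[OF e Fi])
  have q: "(\<integral>\<omega>. Fn J x (Tf J n B \<omega>) \<partial>gauss_measure J) = gauss_sq_c0 J x" for B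
    unfolding Tf_def flip_integral(2)[OF e Fi] by (simp add: Fn_def[abs_def] gauss_sq_c0_def)
  show "integrable (gauss_measure J) (Avg N J n x)"
    unfolding Avg_def using i by (intro integrable_divide integrable_sum) auto
  have "(\<integral>\<omega>. Avg N J n x \<omega> \<partial>gauss_measure J)
      = (\<Sum>B\<in>Pow {1..N}. (\<integral>\<omega>. Fn J x (Tf J n B \<omega>) \<partial>gauss_measure J)) / 2 ^ N"
    unfolding Avg_def using i by (simp add: Bochner_Integration.integral_sum)
  also have "\<dots> = gauss_sq_c0 J x" by (simp add: q card_Pow)
  finally show "(\<integral>\<omega>. Avg N J n x \<omega> \<partial>gauss_measure J) = gauss_sq_c0 J x" .
qed

lemma Avg_pt:
  assumes n: "\<And>j. j < J \<Longrightarrow> n j \<in> {1..N}" and x: "\<And>j. j < J \<Longrightarrow> x j \<in> c0"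
    and m: "m \<in> {1..N}"
  shows "(\<Sum>j\<in>{j. j < J \<and> n j = m}. x j m * \<omega> j)\<^sup>2 \<le> Avg N J n x \<omega>"
proof -
  define V where "V p = (\<Sum>j\<in>{j. j < J \<and> n j = p}. x j m * \<omega> j)" for p
  have lb: "(\<Sum>p\<in>{1..N}. sg B p * V p)\<^sup>2 \<le> Fn J x (Tf J n B \<omega>)" for B
  proof -
    have "(\<Sum>j<J. Tf J n B \<omega> j * x j m) = (\<Sum>j<J. sg B (n j) * (x j m * \<omega> j))"
      by (rule sum.cong) (auto simp: Tf_def)
    also have "\<dots> = (\<Sum>p\<in>{1..N}. \<Sum>j\<in>{j. j<J \<and> n j = p}. sg B (n j) * (x j m * \<omega> j))"
      by (rule sum_fibres_N[OF n])
    also have "\<dots> = (\<Sum>p\<in>{1..N}. sg B p * V p)"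
      unfolding V_def sum_distrib_left by (intro sum.cong refl) auto
    finally have eq: "(\<Sum>j<J. Tf J n B \<omega> j * x j m) = (\<Sum>p\<in>{1..N}. sg B p * V p)" .
    have "((\<lambda>k. \<Sum>j<J. Tf J n B \<omega> j * x j k) m)\<^sup>2 \<le> (c0_norm (\<lambda>k. \<Sum>j<J. Tf J n B \<omega> j * x j k))\<^sup>2"
      by (rule c0_sq_upper, rule c0_lin) (use x in auto)
    then show ?thesis using eq by (simp add: Fn_def)
  qed
  have "2 ^ N * (V m)\<^sup>2 \<le> 2 ^ N * (\<Sum>p\<in>{1..N}. (V p)\<^sup>2)"
    by (intro mult_left_mono member_le_sum) (use m in auto)
  also have "\<dots> = (\<Sum>B\<in>Pow {1..N}. (\<Sum>p\<in>{1..N}. sg B p * V p)\<^sup>2)"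
    using sign_sum[of "{1..N}" V] by simp
  also have "\<dots> \<le> (\<Sum>B\<in>Pow {1..N}. Fn J x (Tf J n B \<omega>))"
    by (rule sum_mono) (rule lb)
  finally have "2 ^ N * (V m)\<^sup>2 \<le> (\<Sum>B\<in>Pow {1..N}. Fn J x (Tf J n B \<omega>))" .
  then show ?thesis unfolding Avg_def V_def by (simp add: field_simps)
qed



lemma tail_lower:
  assumes P: "prob_space M" and D: "distributed M lborel Z (normal_density 0 \<sigma>)"
    and \<sigma>: "\<sigma> > 0" and r: "r \<ge> 0"
  shows "(\<integral>\<omega>. indicator {x. r * \<sigma> < \<bar>x\<bar>} (Z \<omega>) \<partial>M) \<ge> std_normal_density (r + 1)"
proof -
  define A where "A = {x::real. r * \<sigma> < \<bar>x\<bar>}"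
  define c where "c = normal_density 0 \<sigma> ((r + 1) * \<sigma>)"
  have A[measurable]: "A \<in> sets borel" unfolding A_def by measurable
  have le: "r * \<sigma> \<le> (r + 1) * \<sigma>" using \<sigma> by (simp add: algebra_simps)
  have "(\<integral>\<omega>. indicator A (Z \<omega>) \<partial>M) = (\<integral>x. normal_density 0 \<sigma> x * indicator A x \<partial>lborel)"
    by (rule distributed_integral[OF D, symmetric]) auto
  also have "\<dots> \<ge> (\<integral>x. c * indicator {r * \<sigma> <.. (r + 1) * \<sigma>} x \<partial>lborel)"
  proof (rule integral_mono)
    show "integrable lborel (\<lambda>x. normal_density 0 \<sigma> x * indicator A x)"
      by (rule integrable_real_mult_indicator) (auto intro: integrable_normal_density[OF \<sigma>])
    show "integrable lborel (\<lambda>x. c * indicator {r * \<sigma> <.. (r + 1) * \<sigma>} x)"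
      by (intro integrable_mult_right integrable_real_indicator) (use le in auto)
    fix x
    show "c * indicator {r * \<sigma> <.. (r + 1) * \<sigma>} x \<le> normal_density 0 \<sigma> x * indicator A x"
    proof (cases "x \<in> {r * \<sigma> <.. (r + 1) * \<sigma>}")
      case True
      then have xA: "x \<in> A" unfolding A_def by auto
      have x0: "0 \<le> x" using True r \<sigma> by (auto intro: order_trans[of 0 "r*\<sigma>"])
      have "x\<^sup>2 \<le> ((r + 1) * \<sigma>)\<^sup>2" using True x0 by (intro power_mono) auto
      then have "exp (- ((r + 1) * \<sigma> - 0)\<^sup>2 / (2 * \<sigma>\<^sup>2)) \<le> exp (- (x - 0)\<^sup>2 / (2 * \<sigma>\<^sup>2))"
        using \<sigma> by (simp add: divide_right_mono)
      then have "c \<le> normal_density 0 \<sigma> x" unfolding c_def normal_density_def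
        by (intro mult_left_mono) auto
      then show ?thesis using True xA by simp
    next
      case False
      then show ?thesis by simp
    qed
  qed
  also have "(\<integral>x. c * indicator {r * \<sigma> <.. (r + 1) * \<sigma>} x \<partial>lborel) = c * \<sigma>"
    using \<sigma> le by (simp add: algebra_simps)
  also have "c * \<sigma> = std_normal_density (r + 1)"
  proof -
    have "sqrt (2 * pi * \<sigma>\<^sup>2) = sqrt (2 * pi) * \<sigma>" using \<sigma> by (simp add: real_sqrt_mult)
    then show ?thesis unfolding c_def normal_density_def using \<sigma>
      by (simp add: power_mult_distrib field_simps) (simp add: power2_eq_square algebra_simps)
  qed
  finally show ?thesis unfolding A_def .
qed

definition Ablk :: "nat \<Rightarrow> (nat \<Rightarrow> nat) \<Rightarrow> nat \<Rightarrow> nat set" where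
  "Ablk J n m = {j. j < J \<and> n j = m}"

definition Zb :: "nat \<Rightarrow> (nat \<Rightarrow> nat) \<Rightarrow> (nat \<Rightarrow> nat \<Rightarrow> real) \<Rightarrow> nat \<Rightarrow> (nat \<Rightarrow> real) \<Rightarrow> real" where
  "Zb J n x m \<omega> = (\<Sum>j\<in>Ablk J n m. x j m * \<omega> j)"

lemma Zb_indep:
  assumes "m \<noteq> m'"
  shows "prob_space.indep_var (gauss_measure J) borel (Zb J n x m) borel (Zb J n x m')"
proof -
  interpret P: prob_space "gauss_measure J" by (rule G_prob)
  have sub: "Ablk J n m \<subseteq> {..<J}" "Ablk J n m' \<subseteq> {..<J}" unfolding Ablk_def by auto
  have disj: "Ablk J n m \<inter> Ablk J n m' = {}" using assms unfolding Ablk_def by auto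
  note R = P.indep_var_restrict[OF coord_indep disj sub]
  have "P.indep_var borel ((\<lambda>f. \<Sum>j\<in>Ablk J n m. x j m * f j) \<circ> (\<lambda>\<omega>. restrict (\<lambda>i. \<omega> i) (Ablk J n m)))
          borel ((\<lambda>f. \<Sum>j\<in>Ablk J n m'. x j m' * f j) \<circ> (\<lambda>\<omega>. restrict (\<lambda>i. \<omega> i) (Ablk J n m')))"
    by (rule P.indep_var_compose[OF R]) measurable
  moreover have "((\<lambda>f. \<Sum>j\<in>Ablk J n m. x j m * f j) \<circ> (\<lambda>\<omega>. restrict (\<lambda>i. \<omega> i) (Ablk J n m))) = Zb J n x m"
    unfolding Zb_def by (auto intro!: ext sum.cong)
  moreover have "((\<lambda>f. \<Sum>j\<in>Ablk J n m'. x j m' * f j) \<circ> (\<lambda>\<omega>. restrict (\<lambda>i. \<omega> i) (Ablk J n m'))) = Zb J n x m'"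
    unfolding Zb_def by (auto intro!: ext sum.cong)
  ultimately show ?thesis by simp
qed

lemma Zb_meas[measurable]: "Zb J n x m \<in> borel_measurable (gauss_measure J)"
proof -
  have "Ablk J n m \<subseteq> {..<J}" unfolding Ablk_def by auto
  then have "(\<lambda>\<omega>. \<Sum>j\<in>Ablk J n m. x j m * \<omega> j) \<in> borel_measurable (PiM {..<J} (\<lambda>_. borel))"
    by (intro borel_measurable_sum borel_measurable_times borel_measurable_const) (auto intro!: measurable_component_singleton)
  then show ?thesis unfolding Zb_def by (simp add: measurable_cong_sets[OF sets_G refl])
qed



definition s2 :: "nat \<Rightarrow> (nat \<Rightarrow> nat) \<Rightarrow> (nat \<Rightarrow> nat \<Rightarrow> real) \<Rightarrow> nat \<Rightarrow> real" where
  "s2 J n x m = (\<Sum>j\<in>Ablk J n m. (x j m)\<^sup>2)"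

definition Ib :: "nat \<Rightarrow> (nat \<Rightarrow> nat) \<Rightarrow> (nat \<Rightarrow> nat \<Rightarrow> real) \<Rightarrow> real \<Rightarrow> nat \<Rightarrow> (nat \<Rightarrow> real) \<Rightarrow> real" where
  "Ib J n x r m \<omega> = indicator {y. r * sqrt (s2 J n x m) < \<bar>y\<bar>} (Zb J n x m \<omega>)"

lemma Ib_meas[measurable]: "Ib J n x r m \<in> borel_measurable (gauss_measure J)"
  unfolding Ib_def by measurable

lemma Ib_01: "Ib J n x r m \<omega> = 0 \<or> Ib J n x r m \<omega> = 1"
  unfolding Ib_def by (auto simp: indicator_def)

lemma Ib_int: "integrable (gauss_measure J) (\<lambda>\<omega>. Ib J n x r m \<omega> * Ib J n x r m' \<omega>)"
     "integrable (gauss_measure J) (Ib J n x r m)"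
proof -
  interpret P: prob_space "gauss_measure J" by (rule G_prob)
  show "integrable (gauss_measure J) (\<lambda>\<omega>. Ib J n x r m \<omega> * Ib J n x r m' \<omega>)"
    by (rule P.integrable_const_bound[where B=1]) (auto simp: Ib_def indicator_def)
  show "integrable (gauss_measure J) (Ib J n x r m)"
    by (rule P.integrable_const_bound[where B=1]) (auto simp: Ib_def indicator_def)
qed

lemma Ib_prod:
  assumes "m \<noteq> m'"
  shows "(\<integral>\<omega>. Ib J n x r m \<omega> * Ib J n x r m' \<omega> \<partial>gauss_measure J)
       = (\<integral>\<omega>. Ib J n x r m \<omega> \<partial>gauss_measure J) * (\<integral>\<omega>. Ib J n x r m' \<omega> \<partial>gauss_measure J)"
proof -
  interpret P: prob_space "gauss_measure J" by (rule G_prob)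
  have "P.indep_var borel ((\<lambda>y. indicator {y. r * sqrt (s2 J n x m) < \<bar>y\<bar>} y :: real) \<circ> Zb J n x m)
          borel ((\<lambda>y. indicator {y. r * sqrt (s2 J n x m') < \<bar>y\<bar>} y :: real) \<circ> Zb J n x m')"
    by (rule P.indep_var_compose[OF Zb_indep[OF assms]]) measurable
  then have ind: "P.indep_var borel (Ib J n x r m) borel (Ib J n x r m')"
    unfolding Ib_def comp_def by simp
  show ?thesis
    by (rule P.indep_var_lebesgue_integral[OF ind]) (auto intro: Ib_int)
qed

lemma Avg_nonneg: "0 \<le> Avg N J n x \<omega>"
  unfolding Avg_def Fn_def by (auto intro!: sum_nonneg divide_nonneg_nonneg)

lemma count_main:
  assumes n: "\<And>j. j < J \<Longrightarrow> n j \<in> {1..N}" and x: "\<And>j. j < J \<Longrightarrow> x j \<in> c0"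
    and r: "r \<ge> 0" and t: "t > 0" and K: "K \<subseteq> {1..N}" and Kt: "\<And>m. m \<in> K \<Longrightarrow> t \<le> s2 J n x m"
    and S2: "(\<Sum>m\<in>K. \<integral>\<omega>. Ib J n x r m \<omega> \<partial>gauss_measure J) \<ge> 2"
  shows "t * r\<^sup>2 / 2 \<le> gauss_sq_c0 J x"
proof -
  interpret P: prob_space "gauss_measure J" by (rule G_prob)
  define q where "q m = (\<integral>\<omega>. Ib J n x r m \<omega> \<partial>gauss_measure J)" for m
  define S where "S = (\<Sum>m\<in>K. q m)"
  define c where "c \<omega> = (\<Sum>m\<in>K. Ib J n x r m \<omega>)" for \<omega>
  define lm where "lm = 1 / S"
  have finK: "finite K" using K finite_subset by blast
  have S2': "S \<ge> 2" using S2 unfolding S_def q_def .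
  have q0: "q m \<ge> 0" for m unfolding q_def
    by (rule integral_nonneg_AE) (auto simp: Ib_def)
  have lam: "lm > 0" unfolding lm_def using S2' by simp
  have pt: "t * r\<^sup>2 * (2 * lm * c \<omega> - lm\<^sup>2 * (c \<omega>)\<^sup>2) \<le> Avg N J n x \<omega>" for \<omega>
  proof (cases "\<exists>m\<in>K. Ib J n x r m \<omega> = 1")
    case False
    then have "c \<omega> = 0" unfolding c_def using Ib_01 by (intro sum.neutral) metis
    then show ?thesis using Avg_nonneg by simp
  next
    case True
    then obtain m where m: "m \<in> K" "Ib J n x r m \<omega> = 1" by auto
    have big: "r * sqrt (s2 J n x m) < \<bar>Zb J n x m \<omega>\<bar>" using m(2) unfolding Ib_def
      by (auto simp: indicator_def split: if_splits)
    have s0: "s2 J n x m \<ge> 0" unfolding s2_def by (auto intro: sum_nonneg)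
    have "t * r\<^sup>2 \<le> s2 J n x m * r\<^sup>2" using Kt[OF m(1)] by (intro mult_right_mono) auto
    also have "\<dots> = (r * sqrt (s2 J n x m))\<^sup>2" using s0 by (simp add: power_mult_distrib)
    also have "\<dots> \<le> (Zb J n x m \<omega>)\<^sup>2"
      using big r s0 by (metis abs_ge_zero less_imp_le power2_abs power_mono mult_nonneg_nonneg real_sqrt_ge_zero)
    also have "\<dots> \<le> Avg N J n x \<omega>"
      unfolding Zb_def Ablk_def by (rule Avg_pt[OF n x]) (use m K in auto)
    finally have 1: "t * r\<^sup>2 \<le> Avg N J n x \<omega>" .
    have 2: "2 * lm * c \<omega> - lm\<^sup>2 * (c \<omega>)\<^sup>2 \<le> 1"
    proof -
      have "0 \<le> (lm * c \<omega> - 1)\<^sup>2" by simp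
      then show ?thesis by (simp add: power2_eq_square algebra_simps)
    qed
    have "t * r\<^sup>2 * (2 * lm * c \<omega> - lm\<^sup>2 * (c \<omega>)\<^sup>2) \<le> t * r\<^sup>2 * 1"
      using t by (intro mult_left_mono 2) auto
    then show ?thesis using 1 by simp
  qed
  have csq: "(c \<omega>)\<^sup>2 = (\<Sum>m\<in>K. \<Sum>m'\<in>K. Ib J n x r m \<omega> * Ib J n x r m' \<omega>)" for \<omega>
    unfolding c_def power2_eq_square sum_product ..
  have int_c: "integrable (gauss_measure J) c" unfolding c_def[abs_def] by (intro Bochner_Integration.integrable_sum) (auto intro: Ib_int)
  have int_c2: "integrable (gauss_measure J) (\<lambda>\<omega>. (c \<omega>)\<^sup>2)"
    unfolding csq by (intro Bochner_Integration.integrable_sum) (auto intro: Ib_int)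
  have Ec: "(\<integral>\<omega>. c \<omega> \<partial>gauss_measure J) = S"
    unfolding c_def S_def q_def by (rule Bochner_Integration.integral_sum) (rule Ib_int)
  have Ec2: "(\<integral>\<omega>. (c \<omega>)\<^sup>2 \<partial>gauss_measure J) \<le> S + S\<^sup>2"
  proof -
    have "(\<integral>\<omega>. (c \<omega>)\<^sup>2 \<partial>gauss_measure J) =
          (\<Sum>m\<in>K. \<Sum>m'\<in>K. \<integral>\<omega>. Ib J n x r m \<omega> * Ib J n x r m' \<omega> \<partial>gauss_measure J)"
      unfolding csq by (simp add: Bochner_Integration.integral_sum Ib_int Bochner_Integration.integrable_sum)
    also have "\<dots> \<le> (\<Sum>m\<in>K. \<Sum>m'\<in>K. (if m = m' then q m else 0) + q m * q m')"
    proof (intro sum_mono)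
      fix m m' assume "m \<in> K" "m' \<in> K"
      show "(\<integral>\<omega>. Ib J n x r m \<omega> * Ib J n x r m' \<omega> \<partial>gauss_measure J) \<le> (if m = m' then q m else 0) + q m * q m'"
      proof (cases "m = m'")
        case True
        have "(\<lambda>\<omega>. Ib J n x r m \<omega> * Ib J n x r m \<omega>) = Ib J n x r m"
          using Ib_01 by (intro ext) (metis mult_1 mult_zero_left)
        then show ?thesis using True q0[of m] unfolding q_def
          by (simp add: mult_nonneg_nonneg)
      next
        case False
        then show ?thesis using Ib_prod[OF False] unfolding q_def by simp
      qed
    qed
    also have "\<dots> = S + S\<^sup>2"
      unfolding S_def using finK
      by (simp add: sum.distrib power2_eq_square sum_product)
    finally show ?thesis .
  qed
  have "(\<integral>\<omega>. t * r\<^sup>2 * (2 * lm * c \<omega> - lm\<^sup>2 * (c \<omega>)\<^sup>2) \<partial>gauss_measure J) \<le> (\<integral>\<omega>. Avg N J n x \<omega> \<partial>gauss_measure J)"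
    by (rule integral_mono[OF _ Avg_int(1)[OF x] pt]) (use int_c int_c2 in auto)
  also have "\<dots> = gauss_sq_c0 J x" by (rule Avg_int(2)[OF x])
  also have "(\<integral>\<omega>. t * r\<^sup>2 * (2 * lm * c \<omega> - lm\<^sup>2 * (c \<omega>)\<^sup>2) \<partial>gauss_measure J)
      = t * r\<^sup>2 * (2 * lm * S - lm\<^sup>2 * (\<integral>\<omega>. (c \<omega>)\<^sup>2 \<partial>gauss_measure J))"
    using int_c int_c2 by (simp add: Ec)
  finally have M: "t * r\<^sup>2 * (2 * lm * S - lm\<^sup>2 * (\<integral>\<omega>. (c \<omega>)\<^sup>2 \<partial>gauss_measure J)) \<le> gauss_sq_c0 J x" .
  have "2 * lm * S - lm\<^sup>2 * (S + S\<^sup>2) \<le> 2 * lm * S - lm\<^sup>2 * (\<integral>\<omega>. (c \<omega>)\<^sup>2 \<partial>gauss_measure J)"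
    using Ec2 lam by (simp add: mult_left_mono)
  moreover have "2 * lm * S - lm\<^sup>2 * (S + S\<^sup>2) = 1 - 1 / S"
    unfolding lm_def using S2' by (simp add: field_simps power2_eq_square)
  moreover have "1 - 1 / S \<ge> 1 / 2" using S2' by (simp add: field_simps)
  ultimately have "1 / 2 \<le> 2 * lm * S - lm\<^sup>2 * (\<integral>\<omega>. (c \<omega>)\<^sup>2 \<partial>gauss_measure J)" by linarith
  then have "t * r\<^sup>2 * (1 / 2) \<le> t * r\<^sup>2 * (2 * lm * S - lm\<^sup>2 * (\<integral>\<omega>. (c \<omega>)\<^sup>2 \<partial>gauss_measure J))"
    using t by (intro mult_left_mono) auto
  then show ?thesis using M by simp
qed



lemma s2_le:
  assumes x: "\<And>j. j < J \<Longrightarrow> x j \<in> c0"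
  shows "s2 J n x m \<le> gauss_sq_c0 J x"
proof -
  have "s2 J n x m \<le> (\<Sum>j<J. (x j m)\<^sup>2)" unfolding s2_def Ablk_def by (rule sum_mono2) auto
  also have "\<dots> \<le> gauss_sq_c0 J x" by (rule coord_le_c0[OF x])
  finally show ?thesis .
qed

lemma s2_sum:
  assumes n: "\<And>j. j < J \<Longrightarrow> n j \<in> {1..N}"
  shows "(\<Sum>j<J. (x j (n j))\<^sup>2) = (\<Sum>m\<in>{1..N}. s2 J n x m)"
proof -
  have "(\<Sum>j<J. (x j (n j))\<^sup>2) = (\<Sum>m\<in>{1..N}. \<Sum>j\<in>{j. j<J \<and> n j = m}. (x j (n j))\<^sup>2)"
    by (rule sum_fibres_N[OF n])
  also have "\<dots> = (\<Sum>m\<in>{1..N}. s2 J n x m)"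
    unfolding s2_def Ablk_def by (intro sum.cong refl) auto
  finally show ?thesis .
qed

lemma q_lower:
  assumes r: "r \<ge> 0" and s: "s2 J n x m > 0"
  shows "(\<integral>\<omega>. Ib J n x r m \<omega> \<partial>gauss_measure J) \<ge> std_normal_density (r + 1)"
proof -
  have I: "Ablk J n m \<subseteq> {..<J}" unfolding Ablk_def by auto
  have ne: "\<exists>j\<in>Ablk J n m. x j m \<noteq> 0"
  proof (rule ccontr)
    assume "\<not> ?thesis"
    then have "s2 J n x m = 0" unfolding s2_def by simp
    then show False using s by simp
  qed
  have D: "distributed (gauss_measure J) lborel (Zb J n x m) (normal_density 0 (sqrt (s2 J n x m)))"
    using lin_normal[OF I, of "\<lambda>j. x j m", OF ne] unfolding Zb_def[abs_def] s2_def by simp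
  show ?thesis unfolding Ib_def
    by (rule tail_lower[OF G_prob D]) (use s r in auto)
qed

lemma final_arith:
  fixes L :: real assumes L: "L \<ge> 16"
  shows "L \<le> 4 * exp L * std_normal_density (sqrt (L / 2) + 1)"
proof -
  define r where "r = sqrt (L / 2)"
  have r0: "r \<ge> 0" unfolding r_def using L by simp
  have r2: "r\<^sup>2 = L / 2" unfolding r_def using L by simp
  have sL: "sqrt L \<ge> 4" using L real_sqrt_le_mono[of 16 L] by simp
  have sL2: "(sqrt L)\<^sup>2 = L" using L by simp
  have rle: "r \<le> sqrt L" unfolding r_def using L by (intro real_sqrt_le_mono) auto
  have lnL: "ln L \<le> 2 * sqrt L - 2"
  proof -
    have "ln (sqrt L) \<le> sqrt L - 1" using sL L by (intro ln_le_minus_one) auto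
    moreover have "ln L = 2 * ln (sqrt L)" using L by (simp add: ln_sqrt)
    ultimately show ?thesis by simp
  qed
  have "sqrt L * 4 \<le> sqrt L * sqrt L" using sL L by (intro mult_left_mono) auto
  then have sq: "4 * sqrt L \<le> L" using sL2 by (simp add: power2_eq_square mult.commute)
  have key: "ln L \<le> L - (r + 1)\<^sup>2 / 2"
  proof -
    have "(r + 1)\<^sup>2 / 2 = L / 4 + r + 1 / 2" using r2 by (simp add: power2_eq_square algebra_simps)
    then show ?thesis using lnL rle sq by linarith
  qed
  have c: "4 / sqrt (2 * pi) \<ge> 1"
  proof -
    have "2 * pi \<le> 16" using pi_approx by simp
    then have "sqrt (2 * pi) \<le> 4" using real_sqrt_le_mono[of "2*pi" 16] by simp
    then show ?thesis by simp
  qed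
  have "L = exp (ln L)" using L by simp
  also have "\<dots> \<le> exp (L - (r + 1)\<^sup>2 / 2)" using key by simp
  also have "\<dots> = exp L * exp (- (r + 1)\<^sup>2 / 2)" by (simp add: exp_add[symmetric])
  also have "\<dots> \<le> (4 / sqrt (2 * pi)) * (exp L * exp (- (r + 1)\<^sup>2 / 2))"
    using mult_right_mono[OF c, of "exp L * exp (- (r + 1)\<^sup>2 / 2)"] by simp
  also have "\<dots> = 4 * exp L * std_normal_density (r + 1)"
    unfolding std_normal_density_def by simp
  finally show ?thesis unfolding r_def .
qed

lemma hard_UB:
  assumes N: "ln (real N) > 16"
    and n: "\<And>j. j < J \<Longrightarrow> n j \<in> {1..N}" and x: "\<And>j. j < J \<Longrightarrow> x j \<in> c0"
  shows "(\<Sum>j<J. (x j (n j))\<^sup>2) \<le> 16 * real N / ln (real N) * gauss_sq_c0 J x"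
proof -
  define M where "M = gauss_sq_c0 J x"
  define L where "L = ln (real N)"
  have Npos: "real N > 0" using N by (cases N) auto
  have L16: "L > 16" using N L_def by simp
  have NL: "real N = exp L" unfolding L_def using Npos by simp
  have M0: "M \<ge> 0" unfolding M_def gauss_sq_c0_def by (rule integral_nonneg_AE) auto
  have sum_eq: "(\<Sum>j<J. (x j (n j))\<^sup>2) = (\<Sum>m\<in>{1..N}. s2 J n x m)" by (rule s2_sum[OF n])
  have s2M: "s2 J n x m \<le> M" for m unfolding M_def by (rule s2_le[OF x])
  have s20: "s2 J n x m \<ge> 0" for m unfolding s2_def by (auto intro: sum_nonneg)
  show ?thesis
  proof (cases "M = 0")
    case True
    then have "s2 J n x m = 0" for m using s2M[of m] s20[of m] by simp
    then show ?thesis using sum_eq True M0 unfolding M_def by simp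
  next
    case False
    then have Mpos: "M > 0" using M0 by simp
    define r where "r = sqrt (L / 2)"
    have r0: "r \<ge> 0" unfolding r_def using L16 by simp
    have r2: "r\<^sup>2 = L / 2" unfolding r_def using L16 by simp
    define t where "t = 8 * M / L"
    have t: "t > 0" unfolding t_def using Mpos L16 by simp
    define K where "K = {m\<in>{1..N}. t \<le> s2 J n x m}"
    have K: "K \<subseteq> {1..N}" unfolding K_def by auto
    have finK: "finite K" using K finite_subset by blast
    define ph where "ph = std_normal_density (r + 1)"
    have ph: "ph > 0" unfolding ph_def std_normal_density_def by simp
    have cardK: "real (card K) * ph < 2"
    proof (rule ccontr)
      assume "\<not> ?thesis"
      then have c2: "real (card K) * ph \<ge> 2" by simp
      have "real (card K) * ph = (\<Sum>m\<in>K. ph)" by simp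
      also have "\<dots> \<le> (\<Sum>m\<in>K. \<integral>\<omega>. Ib J n x r m \<omega> \<partial>gauss_measure J)"
      proof (rule sum_mono)
        fix m assume "m \<in> K"
        then have "s2 J n x m > 0" using t unfolding K_def by auto
        then show "ph \<le> (\<integral>\<omega>. Ib J n x r m \<omega> \<partial>gauss_measure J)"
          unfolding ph_def by (rule q_lower[OF r0])
      qed
      finally have "(\<Sum>m\<in>K. \<integral>\<omega>. Ib J n x r m \<omega> \<partial>gauss_measure J) \<ge> 2" using c2 by linarith
      from count_main[OF n x r0 t K _ this] have "t * r\<^sup>2 / 2 \<le> gauss_sq_c0 J x"
        unfolding K_def by auto
      moreover have "t * r\<^sup>2 / 2 = 2 * M" unfolding t_def r2 using L16 by simp
      ultimately show False using Mpos unfolding M_def by simp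
    qed
    have split: "(\<Sum>m\<in>{1..N}. s2 J n x m) = (\<Sum>m\<in>{1..N} - K. s2 J n x m) + (\<Sum>m\<in>K. s2 J n x m)"
      using K by (simp add: sum.subset_diff)
    have A1: "(\<Sum>m\<in>{1..N} - K. s2 J n x m) \<le> real N * t"
    proof -
      have "(\<Sum>m\<in>{1..N} - K. s2 J n x m) \<le> (\<Sum>m\<in>{1..N} - K. t)"
        by (rule sum_mono) (auto simp: K_def)
      also have "\<dots> = real (card ({1..N} - K)) * t" by simp
      also have "\<dots> \<le> real N * t"
      proof -
        have "card ({1..N} - K) \<le> card {1..N}" by (rule card_mono) auto
        then have "real (card ({1..N} - K)) \<le> real N" by simp
        then show ?thesis using t by (intro mult_right_mono) auto
      qed
      finally show ?thesis .
    qed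
    have A2: "(\<Sum>m\<in>K. s2 J n x m) \<le> 8 * real N / L * M"
    proof -
      have "(\<Sum>m\<in>K. s2 J n x m) \<le> (\<Sum>m\<in>K. M)" by (rule sum_mono) (rule s2M)
      also have "\<dots> = real (card K) * M" by simp
      also have "\<dots> \<le> (2 / ph) * M"
      proof -
        have "real (card K) \<le> 2 / ph" using cardK ph by (simp add: field_simps)
        then show ?thesis using M0 by (rule mult_right_mono)
      qed
      also have "\<dots> \<le> (8 * real N / L) * M"
      proof -
        have "L \<le> 4 * exp L * ph" unfolding ph_def r_def by (rule final_arith) (use L16 in auto)
        then have "2 / ph \<le> 8 * real N / L" using ph L16 NL by (simp add: field_simps)
        then show ?thesis using M0 by (rule mult_right_mono)
      qed
      finally show ?thesis .
    qed
    have "(\<Sum>m\<in>{1..N}. s2 J n x m) \<le> real N * t + 8 * real N / L * M"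
      using split A1 A2 by linarith
    also have "real N * t + 8 * real N / L * M = 16 * real N / L * M"
      unfolding t_def by (simp add: field_simps)
    finally show ?thesis using sum_eq unfolding M_def L_def by simp
  qed
qed



lemma gauss_sq_c0_nonneg: "0 \<le> gauss_sq_c0 J x"
  unfolding gauss_sq_c0_def by (rule integral_nonneg_AE) auto

lemma UB_all:
  assumes N: "N \<ge> 2"
    and n: "\<And>j. j < J \<Longrightarrow> n j \<in> {1..N}" and x: "\<And>j. j < J \<Longrightarrow> x j \<in> c0"
  shows "(\<Sum>j<J. (x j (n j))\<^sup>2) \<le> 16 * real N / ln (real N) * gauss_sq_c0 J x"
proof (cases "ln (real N) > 16")
  case True then show ?thesis using hard_UB[OF True n x] by simp
next
  case False
  have lpos: "ln (real N) > 0" using N by simp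
  have "real N * ln (real N) \<le> real N * 16" using False lpos
    by (intro mult_left_mono) auto
  then have "real N \<le> 16 * real N / ln (real N)" using lpos
    by (simp add: divide_simps mult.commute)
  then have "real N * gauss_sq_c0 J x \<le> 16 * real N / ln (real N) * gauss_sq_c0 J x"
    using gauss_sq_c0_nonneg[of J x] by (rule mult_right_mono)
  moreover have "(\<Sum>j<J. (x j (n j))\<^sup>2) \<le> real N * gauss_sq_c0 J x"
    by (rule elem_UB) (use n x in auto)
  ultimately show ?thesis by linarith
qed

theorem mainTheorem8:
  fixes N :: nat
  assumes "N \<ge> 2"
  shows "sqrt (real N / (2 * ln (2 * real N))) \<le> gamma_bound (coord ` {1..N})
       \<and> gamma_bound (coord ` {1..N}) \<le> 4 * sqrt (real N / ln (real N))"
proof -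
  define A where "A = {C. \<forall>J (S :: nat \<Rightarrow> (nat \<Rightarrow> real) \<Rightarrow> real) (x :: nat \<Rightarrow> nat \<Rightarrow> real).
      (\<forall>j<J. S j \<in> coord ` {1..N}) \<longrightarrow> (\<forall>j<J. x j \<in> c0) \<longrightarrow>
      sqrt (gauss_sq_real J (\<lambda>j. S j (x j))) \<le> C * sqrt (gauss_sq_c0 J x)}"
  have gb: "gamma_bound (coord ` {1..N}) = Inf A" unfolding gamma_bound_def A_def ..
  define U where "U = 4 * sqrt (real N / ln (real N))"
  define L where "L = sqrt (real N / (2 * ln (2 * real N)))"
  have lpos: "ln (real N) > 0" using assms by simp
  have UA: "U \<in> A"
    unfolding A_def mem_Collect_eq
  proof (intro allI impI)
    fix J and S :: "nat \<Rightarrow> (nat \<Rightarrow> real) \<Rightarrow> real" and x :: "nat \<Rightarrow> nat \<Rightarrow> real"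
    assume S: "\<forall>j<J. S j \<in> coord ` {1..N}" and x: "\<forall>j<J. x j \<in> c0"
    obtain n where n: "\<And>j. j < J \<Longrightarrow> n j \<in> {1..N} \<and> S j = coord (n j)"
    proof -
      have "\<forall>j. \<exists>m. j < J \<longrightarrow> m \<in> {1..N} \<and> S j = coord m" using S by blast
      from choice[OF this] show ?thesis using that by blast
    qed
    have "gauss_sq_real J (\<lambda>j. S j (x j)) = (\<Sum>j<J. (x j (n j))\<^sup>2)"
      unfolding real_eq by (rule sum.cong) (use n in \<open>auto simp: coord_def\<close>)
    also have "\<dots> \<le> 16 * real N / ln (real N) * gauss_sq_c0 J x"
      by (rule UB_all[OF assms]) (use n x in auto)
    finally have "sqrt (gauss_sq_real J (\<lambda>j. S j (x j))) \<le> sqrt (16 * real N / ln (real N) * gauss_sq_c0 J x)"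
      by simp
    also have "\<dots> = U * sqrt (gauss_sq_c0 J x)"
      unfolding U_def using lpos by (simp add: real_sqrt_mult real_sqrt_divide)
    finally show "sqrt (gauss_sq_real J (\<lambda>j. S j (x j))) \<le> U * sqrt (gauss_sq_c0 J x)" .
  qed
  have AD: "\<And>C J S x. C \<in> A \<Longrightarrow> (\<forall>j<J. S j \<in> coord ` {1..N}) \<Longrightarrow> (\<forall>j<J. x j \<in> c0) \<Longrightarrow>
      sqrt (gauss_sq_real J (\<lambda>j. S j (x j))) \<le> C * sqrt (gauss_sq_c0 J x)"
    unfolding A_def by blast
  have LA: "L \<le> C" if "C \<in> A" for C
  proof -
    have "\<forall>j<N. (\<lambda>j. coord (Suc j)) j \<in> coord ` {1..N}" by auto
    moreover have "\<forall>j<N. eunit j \<in> c0" by (auto intro: eunit_c0)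
    ultimately have ineq: "sqrt (gauss_sq_real N (\<lambda>j. coord (Suc j) (eunit j))) \<le> C * sqrt (gauss_sq_c0 N eunit)"
      using AD[OF that, where J=N and S="\<lambda>j. coord (Suc j)" and x=eunit] by simp
    have "gauss_sq_real N (\<lambda>j. coord (Suc j) (eunit j)) = real N"
      unfolding real_eq by (simp add: coord_def eunit_def)
    then have ineq2: "sqrt (real N) \<le> C * sqrt (gauss_sq_c0 N eunit)" using ineq by simp
    define D where "D = 2 * ln (2 * real N)"
    have Dpos: "D > 0" unfolding D_def using assms by simp
    have QD: "sqrt (gauss_sq_c0 N eunit) \<le> sqrt D" unfolding D_def using LB_gauss[OF assms] by simp
    have Q0: "sqrt (gauss_sq_c0 N eunit) \<ge> 0" using gauss_sq_c0_nonneg[of N eunit] by simp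
    have Npos: "sqrt (real N) > 0" using assms by simp
    have Cpos: "C > 0"
    proof (rule ccontr)
      assume "\<not> C > 0"
      then have "C * sqrt (gauss_sq_c0 N eunit) \<le> 0" using Q0 by (simp add: mult_nonpos_nonneg)
      then show False using ineq2 Npos by linarith
    qed
    have "sqrt (real N) \<le> C * sqrt D" using ineq2 mult_left_mono[OF QD, of C] Cpos by linarith
    then have "sqrt (real N) / sqrt D \<le> C" using Dpos by (simp add: divide_simps mult.commute)
    then show ?thesis unfolding L_def D_def by (simp add: real_sqrt_divide)
  qed
  have ne: "A \<noteq> {}" using UA by auto
  have bdd: "bdd_below A" by (rule bdd_belowI[of _ L]) (rule LA)
  have "L \<le> Inf A" using ne LA by (rule cInf_greatest)
  moreover have "Inf A \<le> U" by (rule cInf_lower[OF UA bdd])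
  ultimately show ?thesis unfolding gb L_def U_def by simp
qed


end
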